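(* Let $T$ be a binary tree, i.e. a finite tree in which every vertex has degree $1$ or $3$ except possibly one vertex (the root) of degree $2$, and let $n_1$ be the number of vertices of degree $1$ in $T$. Then $tvs(T)=\left\lceil \tfrac{n_1+1}{2}\right\rceil$.
   Context: Graphs are finite, simple and undirected. For a graph $G$, a total weighting is a map $w: V(G)\cup E(G)\to \{1,2,\dots\}$; the weighted degree of a vertex $v$ is $wt_G(v)=w(v)+\sum_{e\in E(G),\, v\in e} w(e)$. The weighting is irregular if $wt_G(u)\neq wt_G(v)$ for all distinct $u,v\in V(G)$. The total vertex irregularity strength $tvs(G)$ is the smallest integer $s$ such that there is an irregular total weighting of $G$ with values in $\{1,2,\dots,s\}$. *)

theory Defs
  imports Complex_Main
begin

definition simple_graph :: "'a set \<Rightarrow> 'a set set \<Rightarrow> bool" where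
  "simple_graph V E \<longleftrightarrow> finite V \<and>
     (\<forall>e\<in>E. \<exists>u v. u \<in> V \<and> v \<in> V \<and> u \<noteq> v \<and> e = {u, v})"

definition degree :: "'a set set \<Rightarrow> 'a \<Rightarrow> nat" where
  "degree E v = card {e \<in> E. v \<in> e}"

definition is_walk :: "'a set \<Rightarrow> 'a set set \<Rightarrow> 'a list \<Rightarrow> bool" where
  "is_walk V E xs \<longleftrightarrow> xs \<noteq> [] \<and> set xs \<subseteq> V \<and>
     (\<forall>i. Suc i < length xs \<longrightarrow> {xs ! i, xs ! Suc i} \<in> E)"

definition connected_graph :: "'a set \<Rightarrow> 'a set set \<Rightarrow> bool" where
  "connected_graph V E \<longleftrightarrow> V \<noteq> {} \<and>
     (\<forall>u\<in>V. \<forall>v\<in>V. \<exists>xs. is_walk V E xs \<and> hd xs = u \<and> last xs = v)"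

definition is_cycle :: "'a set \<Rightarrow> 'a set set \<Rightarrow> 'a list \<Rightarrow> bool" where
  "is_cycle V E xs \<longleftrightarrow> length xs \<ge> 3 \<and> distinct xs \<and> is_walk V E xs \<and>
     {last xs, hd xs} \<in> E"

definition acyclic_graph :: "'a set \<Rightarrow> 'a set set \<Rightarrow> bool" where
  "acyclic_graph V E \<longleftrightarrow> (\<nexists>xs. is_cycle V E xs)"

definition is_tree :: "'a set \<Rightarrow> 'a set set \<Rightarrow> bool" where
  "is_tree V E \<longleftrightarrow> simple_graph V E \<and> connected_graph V E \<and> acyclic_graph V E"

definition binary_tree :: "'a set \<Rightarrow> 'a set set \<Rightarrow> bool" where
  "binary_tree V E \<longleftrightarrow> is_tree V E \<and>
     (\<forall>v\<in>V. degree E v = 1 \<or> degree E v = 2 \<or> degree E v = 3) \<and>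
     card {v \<in> V. degree E v = 2} \<le> 1"

definition weighted_degree :: "'a set set \<Rightarrow> ('a \<Rightarrow> nat) \<Rightarrow> ('a set \<Rightarrow> nat) \<Rightarrow> 'a \<Rightarrow> nat" where
  "weighted_degree E wv we v = wv v + (\<Sum>e\<in>{e \<in> E. v \<in> e}. we e)"

definition irregular_total_weighting ::
  "'a set \<Rightarrow> 'a set set \<Rightarrow> nat \<Rightarrow> ('a \<Rightarrow> nat) \<Rightarrow> ('a set \<Rightarrow> nat) \<Rightarrow> bool" where
  "irregular_total_weighting V E s wv we \<longleftrightarrow>
     (\<forall>v\<in>V. wv v \<in> {1..s}) \<and> (\<forall>e\<in>E. we e \<in> {1..s}) \<and>
     (\<forall>u\<in>V. \<forall>v\<in>V. u \<noteq> v \<longrightarrow> weighted_degree E wv we u \<noteq> weighted_degree E wv we v)"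

definition tvs :: "'a set \<Rightarrow> 'a set set \<Rightarrow> nat" where
  "tvs V E = (LEAST s. \<exists>wv we. irregular_total_weighting V E s wv we)"

end

theory Submission
  imports Defs
begin
lemma ceil_half: "nat \<lceil>(real n + 1) / 2\<rceil> = (n+2) div 2"
proof -
  have "\<lceil>(real n + 1) / 2\<rceil> = int ((n+2) div 2)"
  proof (rule ceiling_unique)
    show "real_of_int (int ((n + 2) div 2)) - 1 < (real n + 1) / 2"
      by (cases "even n") (auto elim!: evenE oddE simp: field_simps)
    show "(real n + 1) / 2 \<le> real_of_int (int ((n + 2) div 2))"
      by (cases "even n") (auto elim!: evenE oddE simp: field_simps)
  qed
  thus ?thesis by simp
qed

lemma sg_edge:
  assumes "simple_graph V E" "e \<in> E"
  obtains u v where "u \<in> V" "v \<in> V" "u \<noteq> v" "e = {u, v}"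
  using assms unfolding simple_graph_def by blast

lemma sg_finite: "simple_graph V E \<Longrightarrow> finite V"
  unfolding simple_graph_def by blast

lemma sg_sub: "simple_graph V E \<Longrightarrow> e \<in> E \<Longrightarrow> e \<subseteq> V"
  by (auto elim: sg_edge)

lemma sg_card2: "simple_graph V E \<Longrightarrow> e \<in> E \<Longrightarrow> card e = 2"
  by (auto elim: sg_edge)

lemma sg_finE: "simple_graph V E \<Longrightarrow> finite E"
proof -
  assume a: "simple_graph V E"
  have "E \<subseteq> Pow V" using sg_sub[OF a] by blast
  thus ?thesis using sg_finite[OF a] finite_subset by blast
qed

lemma card_filter_sum: "finite A \<Longrightarrow> card {x\<in>A. P x} = (\<Sum>x\<in>A. if P x then 1 else 0)"
  by (simp add: sum.If_cases Int_def)

lemma handshake: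
  assumes sg: "simple_graph V E"
  shows "(\<Sum>v\<in>V. degree E v) = 2 * card E"
proof -
  have fE: "finite E" using sg_finE[OF sg] .
  have fV: "finite V" using sg_finite[OF sg] .
  have "(\<Sum>v\<in>V. degree E v) = (\<Sum>v\<in>V. \<Sum>e\<in>E. if v \<in> e then 1 else 0)"
    unfolding degree_def using fE by (simp add: card_filter_sum)
  also have "\<dots> = (\<Sum>e\<in>E. \<Sum>v\<in>V. if v \<in> e then 1 else 0)"
    by (rule sum.swap)
  also have "\<dots> = (\<Sum>e\<in>E. 2)"
  proof (rule sum.cong)
    fix e assume "e \<in> E"
    hence "e \<subseteq> V" "card e = 2" using sg_sub[OF sg] sg_card2[OF sg] by auto
    hence "{v\<in>V. v \<in> e} = e" by auto
    hence "(\<Sum>v\<in>V. if v \<in> e then 1 else 0) = card e"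
      using card_filter_sum[OF fV, of "\<lambda>v. v \<in> e"] by simp
    thus "(\<Sum>v\<in>V. if v \<in> e then 1 else 0) = (2::nat)" using \<open>card e = 2\<close> by simp
  qed simp
  finally show ?thesis by simp
qed

lemma walk_mono: "is_walk V' E' xs \<Longrightarrow> V' \<subseteq> V \<Longrightarrow> E' \<subseteq> E \<Longrightarrow> is_walk V E xs"
  unfolding is_walk_def by blast

lemma walk_take: "is_walk V E xs \<Longrightarrow> 0 < k \<Longrightarrow> is_walk V E (take k xs)"
  unfolding is_walk_def by (auto dest: in_set_takeD)

lemma walk_Cons:
  assumes "is_walk V E xs" "z \<in> V" "{z, hd xs} \<in> E"
  shows "is_walk V E (z # xs)"
  unfolding is_walk_def
proof (intro conjI allI impI)
  show "z # xs \<noteq> []" by simp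
  show "set (z # xs) \<subseteq> V" using assms unfolding is_walk_def by auto
  fix i assume "Suc i < length (z # xs)"
  thus "{(z # xs) ! i, (z # xs) ! Suc i} \<in> E"
    using assms unfolding is_walk_def by (cases i) (auto simp: hd_conv_nth)
qed

lemma exists_leaf:
  assumes sg: "simple_graph V E" and ac: "acyclic_graph V E" and ne: "E \<noteq> {}"
  shows "\<exists>x y. x \<noteq> y \<and> {e\<in>E. x \<in> e} = {{x, y}}"
proof -
  define P where "P = {xs. distinct xs \<and> is_walk V E xs}"
  have fV: "finite V" using sg_finite[OF sg] .
  have "P \<subseteq> {xs. set xs \<subseteq> V \<and> length xs \<le> card V}"
  proof
    fix xs assume "xs \<in> P"
    hence d: "distinct xs" and s: "set xs \<subseteq> V" unfolding P_def is_walk_def by auto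
    have "length xs = card (set xs)" using distinct_card[OF d] by simp
    also have "\<dots> \<le> card V" using card_mono[OF fV s] .
    finally show "xs \<in> {xs. set xs \<subseteq> V \<and> length xs \<le> card V}" using s by simp
  qed
  hence fP: "finite P" using finite_lists_length_le[OF fV] finite_subset by blast
  obtain e0 where "e0 \<in> E" using ne by blast
  then obtain u v where uv: "u \<in> V" "v \<in> V" "u \<noteq> v" "{u,v} \<in> E" using sg_edge[OF sg] by metis
  have "[u,v] \<in> P" unfolding P_def is_walk_def using uv
    by (auto simp: less_Suc_eq nth_Cons split: nat.splits)
  hence neP: "length ` P \<noteq> {}" by blast
  define M where "M = Max (length ` P)"
  have "M \<in> length ` P" unfolding M_def using fP neP by simp
  then obtain xs where xsP: "xs \<in> P" and lxs: "length xs = M" by blast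
  have Mge: "length [u,v] \<le> M" unfolding M_def
    using Max_ge[OF finite_imageI[OF fP] imageI[OF \<open>[u,v] \<in> P\<close>, of length]] .
  hence l2: "2 \<le> length xs" using lxs by simp
  have dxs: "distinct xs" and wxs: "is_walk V E xs" using xsP unfolding P_def by auto
  define x where "x = xs ! 0"
  define y where "y = xs ! 1"
  have xy: "{x, y} \<in> E" using wxs l2 unfolding is_walk_def x_def y_def by auto
  have l01: "0 < length xs" "1 < length xs" using l2 by auto
  have xny: "x \<noteq> y" unfolding x_def y_def using nth_eq_iff_index_eq[OF dxs l01] by simp
  have nexs: "xs \<noteq> []" using l2 by auto
  have hdx: "hd xs = x" using hd_conv_nth[OF nexs] unfolding x_def by simp
  have key: "e = {x, y}" if "e \<in> E" "x \<in> e" for e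
  proof -
    obtain a b where ab: "a \<in> V" "b \<in> V" "a \<noteq> b" "e = {a, b}" using sg_edge[OF sg \<open>e \<in> E\<close>] by metis
    obtain z where z: "e = {x, z}" "z \<noteq> x" "z \<in> V" using ab \<open>x \<in> e\<close> by auto
    show ?thesis
    proof (cases "z \<in> set xs")
      case False
      have "is_walk V E (z # xs)"
        using walk_Cons[OF wxs z(3)] hdx z(1) \<open>e \<in> E\<close> by (simp add: insert_commute)
      hence "z # xs \<in> P" using False dxs unfolding P_def by simp
      hence "length (z # xs) \<le> M" unfolding M_def using Max_ge[OF finite_imageI[OF fP] imageI, of "z#xs" length] by blast
      thus ?thesis using lxs by simp
    next
      case True
      then obtain i where i: "i < length xs" "xs ! i = z" by (auto simp: in_set_conv_nth)
      have "i \<noteq> 0" proof assume "i = 0" thus False using i z(2) unfolding x_def by simp qed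
      show ?thesis
      proof (cases "i = 1")
        case True thus ?thesis using i z(1) unfolding y_def by simp
      next
        case False
        with \<open>i \<noteq> 0\<close> have i2: "2 \<le> i" by simp
        let ?c = "take (Suc i) xs"
        have "is_cycle V E ?c"
          unfolding is_cycle_def
        proof (intro conjI)
          show "3 \<le> length ?c" using i i2 by simp
          show "distinct ?c" using dxs by simp
          show "is_walk V E ?c" using walk_take[OF wxs] by simp
          have "length ?c = Suc i" using i by simp
          hence "last ?c = ?c ! i" by (subst last_conv_nth) auto
          hence "last ?c = z" using i by simp
          moreover have "hd ?c = x" using i unfolding x_def by (subst hd_conv_nth) auto
          ultimately show "{last ?c, hd ?c} \<in> E" using z(1) \<open>e \<in> E\<close> by (simp add: insert_commute)
        qed
        thus ?thesis using ac unfolding acyclic_graph_def by blast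
      qed
    qed
  qed
  show ?thesis using key xy xny by blast
qed

lemma acyclic_card:
  assumes "simple_graph V E" "acyclic_graph V E" "V \<noteq> {}"
  shows "card E + 1 \<le> card V"
  using assms
proof (induction "card V" arbitrary: V E rule: less_induct)
  case less
  note sg = less.prems(1)
  show ?case
  proof (cases "E = {}")
    case True
    thus ?thesis using less.prems sg_finite[OF sg] by (simp add: Suc_leI card_gt_0_iff)
  next
    case False
    obtain x y where xy: "x \<noteq> y" "{e\<in>E. x \<in> e} = {{x, y}}"
      using exists_leaf[OF sg less.prems(2) False] by blast
    have xyE: "{x,y} \<in> E" using xy by blast
    hence xV: "x \<in> V" and yV: "y \<in> V" using sg_sub[OF sg] by auto
    define V' where "V' = V - {x}"
    define E' where "E' = E - {{x,y}}"
    have E'eq: "E' = {e\<in>E. x \<notin> e}" unfolding E'_def using xy by auto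
    have sg': "simple_graph V' E'"
      using sg unfolding simple_graph_def V'_def E'eq by blast
    have ac': "acyclic_graph V' E'"
      using less.prems(2) unfolding acyclic_graph_def is_cycle_def
      using walk_mono[of V' E' _ V E] unfolding V'_def E'_def by blast
    have "card V' < card V" unfolding V'_def using xV sg_finite[OF sg] by (intro card_Diff1_less)
    moreover have "V' \<noteq> {}" using yV xy unfolding V'_def by auto
    ultimately have "card E' + 1 \<le> card V'" using less.hyps sg' ac' by blast
    moreover have "card E' = card E - 1" unfolding E'_def using xyE sg_finE[OF sg] by simp
    moreover have "card V' = card V - 1" unfolding V'_def using xV sg_finite[OF sg] by simp
    moreover have "card E \<ge> 1" using xyE sg_finE[OF sg] by (metis One_nat_def Suc_leI card_gt_0_iff empty_iff)
    ultimately show ?thesis by linarith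
  qed
qed

lemma closure:
  assumes conn: "connected_graph V E" and X: "X \<subseteq> V" "u \<in> X"
    and cl: "\<And>a b. {a, b} \<in> E \<Longrightarrow> a \<in> X \<Longrightarrow> b \<in> X"
  shows "V = X"
proof
  show "V \<subseteq> X"
  proof
    fix w assume "w \<in> V"
    then obtain xs where xs: "is_walk V E xs" "hd xs = u" "last xs = w"
      using conn X unfolding connected_graph_def by blast
    have "\<forall>i < length xs. xs ! i \<in> X"
    proof (intro allI impI)
      fix i assume "i < length xs"
      thus "xs ! i \<in> X"
      proof (induction i)
        case 0 thus ?case using xs X by (simp add: hd_conv_nth[symmetric])
      next
        case (Suc i)
        hence "{xs ! i, xs ! Suc i} \<in> E" using xs(1) unfolding is_walk_def by blast
        thus ?case using Suc cl by simp
      qed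
    qed
    moreover have "xs \<noteq> []" using xs(1) unfolding is_walk_def by simp
    ultimately have "xs ! (length xs - 1) \<in> X" by simp
    thus "w \<in> X" using xs(3) \<open>xs \<noteq> []\<close> by (simp add: last_conv_nth)
  qed
qed (use X in auto)

lemma deg1_edge:
  assumes "degree E v = 1"
  obtains e where "{e\<in>E. v \<in> e} = {e}"
proof -
  have "card {e\<in>E. v \<in> e} = 1" using assms unfolding degree_def .
  thus thesis using that by (metis card_1_singletonE)
qed

lemma lower_bound:
  assumes sg: "simple_graph V E" and ne: "V \<noteq> {}"
    and irr: "irregular_total_weighting V E s' wv we"
  shows "card {v\<in>V. degree E v = 1} + 1 \<le> 2 * s'"
proof -
  let ?L = "{v\<in>V. degree E v = 1}"
  let ?f = "weighted_degree E wv we"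
  have fV: "finite V" using sg_finite[OF sg] .
  have s1: "1 \<le> s'" using irr ne unfolding irregular_total_weighting_def by fastforce
  have inj: "inj_on ?f ?L" using irr unfolding irregular_total_weighting_def inj_on_def by blast
  have img: "?f ` ?L \<subseteq> {2..2*s'}"
  proof
    fix y assume "y \<in> ?f ` ?L"
    then obtain v where v: "v \<in> V" "degree E v = 1" "y = ?f v" by blast
    obtain e where e: "{e\<in>E. v \<in> e} = {e}" using deg1_edge[OF v(2)] by blast
    hence "e \<in> E" by blast
    hence "wv v \<in> {1..s'}" "we e \<in> {1..s'}" using irr v unfolding irregular_total_weighting_def by auto
    moreover have "y = wv v + we e" using v(3) e unfolding weighted_degree_def by simp
    ultimately show "y \<in> {2..2*s'}" by auto
  qed
  have "card ?L = card (?f ` ?L)" using card_image[OF inj] by simp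
  also have "\<dots> \<le> card {2..2*s'}" using img by (intro card_mono) auto
  finally show ?thesis using s1 by simp
qed

lemma star_case:
  assumes bt: "binary_tree V E" and vV: "v \<in> V"
    and st: "\<forall>e\<in>E. v \<in> e \<longrightarrow> (\<exists>l\<in>e. l \<noteq> v \<and> degree E l = 1)"
  shows "\<exists>wv we. irregular_total_weighting V E ((card {u\<in>V. degree E u = 1} + 2) div 2) wv we"
proof -
  have sg: "simple_graph V E" and conn: "connected_graph V E"
    and degs: "\<forall>u\<in>V. degree E u = 1 \<or> degree E u = 2 \<or> degree E u = 3"
    using bt unfolding binary_tree_def is_tree_def by auto
  have fV: "finite V" and fE: "finite E" using sg_finite[OF sg] sg_finE[OF sg] by auto
  define N where "N = {l. {v, l} \<in> E}"
  have Nprop: "l \<in> V \<and> l \<noteq> v \<and> degree E l = 1 \<and> {e\<in>E. l \<in> e} = {{v, l}}" if "l \<in> N" for l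
  proof -
    have e: "{v,l} \<in> E" using that unfolding N_def by simp
    then obtain l' where l': "l' \<in> {v,l}" "l' \<noteq> v" "degree E l' = 1" using st by blast
    hence ll: "l' = l" by auto
    have lV: "l \<in> V" using sg_sub[OF sg e] by simp
    obtain e0 where e0: "{e\<in>E. l \<in> e} = {e0}" using deg1_edge l' ll by metis
    have "{v,l} \<in> {e\<in>E. l \<in> e}" using e by simp
    hence "e0 = {v,l}" using e0 by simp
    thus ?thesis using e0 l' ll lV by simp
  qed
  have VN: "V = insert v N"
  proof (rule closure[OF conn _ insertI1])
    show "insert v N \<subseteq> V" using vV Nprop by blast
    fix a b assume ab: "{a, b} \<in> E" "a \<in> insert v N"
    show "b \<in> insert v N"
    proof (cases "a = v")
      case True thus ?thesis using ab unfolding N_def by simp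
    next
      case False
      hence "a \<in> N" using ab by simp
      hence Ea: "{e\<in>E. a \<in> e} = {{v,a}}" using Nprop[of a] by simp
      have "{a,b} \<in> {e\<in>E. a \<in> e}" using ab by simp
      hence "{a,b} \<in> {{v,a}}" unfolding Ea .
      hence "{a,b} = {v,a}" by (simp only: singleton_iff)
      hence "b = v \<or> b = a" by (auto simp: doubleton_eq_iff)
      thus ?thesis using \<open>a \<in> N\<close> by blast
    qed
  qed
  have fN: "finite N" using VN fV by (metis finite_insert)
  have vN: "v \<notin> N" using Nprop by blast
  have EN: "E = (\<lambda>l. {v,l}) ` N"
  proof
    show "(\<lambda>l. {v,l}) ` N \<subseteq> E" unfolding N_def by blast
    show "E \<subseteq> (\<lambda>l. {v,l}) ` N"
    proof
      fix e assume e: "e \<in> E"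
      then obtain a b where ab: "a \<in> V" "b \<in> V" "a \<noteq> b" "e = {a,b}" using sg_edge[OF sg] by metis
      show "e \<in> (\<lambda>l. {v,l}) ` N"
      proof (cases "a = v")
        case True
        hence "b \<in> N" using ab e unfolding N_def by simp
        thus ?thesis using ab True by blast
      next
        case av: False
        show ?thesis
        proof (cases "b = v")
          case True
          hence "{v,a} \<in> E" using ab e by (simp add: insert_commute)
          hence "a \<in> N" unfolding N_def by simp
          thus ?thesis using ab True by (auto simp: insert_commute)
        next
          case False
          hence aN: "a \<in> N" using ab VN av by auto
          hence Ea: "{e\<in>E. a \<in> e} = {{v,a}}" using Nprop[of a] by simp
          have "e \<in> {e\<in>E. a \<in> e}" using ab e by simp
          hence "e = {v,a}" unfolding Ea by simp
          thus ?thesis using aN by blast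
        qed
      qed
    qed
  qed
  have injN: "inj_on (\<lambda>l. {v,l}) N" unfolding inj_on_def using vN by (auto simp: doubleton_eq_iff)
  define d where "d = card N"
  have Ev: "{e\<in>E. v \<in> e} = E" using EN by auto
  have "degree E v = card E" unfolding degree_def using Ev by simp
  also have "\<dots> = d" unfolding d_def using card_image[OF injN] EN by simp
  finally have degv: "degree E v = d" .
  have d123: "d = 1 \<or> d = 2 \<or> d = 3" using degs vV degv by auto
  have Leq: "{u\<in>V. degree E u = 1} = (if d = 1 then insert v N else N)"
    using Nprop VN degv by auto
  have cardL: "card {u\<in>V. degree E u = 1} = (if d = 1 then 2 else d)"
    using Leq fN vN d_def by (auto simp: card_insert_if)
  have s2: "(card {u\<in>V. degree E u = 1} + 2) div 2 = 2" using cardL d123 by auto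
  obtain ix where ix: "bij_betw ix N {0..<d}" using ex_bij_betw_finite_nat[OF fN] unfolding d_def by blast
  have ixlt: "ix l < d" if "l \<in> N" for l using ix that unfolding bij_betw_def by auto
  define we where "we e = 2 - ix (SOME l. l \<in> e \<and> l \<noteq> v) div 2" for e :: "'a set"
  define wv where "wv u = (if u = v then 1 else 2 - (ix u + 1) div 2)" for u
  have we_l: "we {v,l} = 2 - ix l div 2" if "l \<in> N" for l
  proof -
    have "(SOME x. x \<in> {v,l} \<and> x \<noteq> v) = l" using Nprop[OF that] by (intro some_equality) auto
    thus ?thesis unfolding we_def by simp
  qed
  have wdl: "weighted_degree E wv we l = 4 - ix l" if "l \<in> N" for l
  proof -
    have "weighted_degree E wv we l = wv l + we {v,l}"
      unfolding weighted_degree_def using Nprop[OF that] by simp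
    also have "\<dots> = 4 - ix l" unfolding wv_def using we_l[OF that] Nprop[OF that] ixlt[OF that] d123
      by auto
    finally show ?thesis .
  qed
  have "(\<Sum>e\<in>E. we e) = (\<Sum>l\<in>N. we {v,l})" unfolding EN using sum.reindex[OF injN] by simp
  also have "\<dots> = (\<Sum>l\<in>N. 2 - ix l div 2)" using we_l by simp
  also have "\<dots> = (\<Sum>i\<in>{0..<d}. 2 - i div 2)" using sum.reindex_bij_betw[OF ix, of "\<lambda>i. 2 - i div 2"] by simp
  finally have sumE: "(\<Sum>e\<in>E. we e) = (\<Sum>i\<in>{0..<d}. 2 - i div 2)" .
  have wdv: "weighted_degree E wv we v = 1 + (\<Sum>i\<in>{0..<d}. 2 - i div 2)"
    unfolding weighted_degree_def Ev sumE wv_def by simp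
  have wdv_val: "weighted_degree E wv we v = (if d = 1 then 3 else if d = 2 then 5 else 6)"
    using d123 wdv by (auto simp: numeral_3_eq_3 numeral_2_eq_2)
  show ?thesis unfolding s2
  proof (intro exI[of _ wv] exI[of _ we])
    show "irregular_total_weighting V E 2 wv we"
      unfolding irregular_total_weighting_def
    proof (intro conjI ballI impI)
      fix u assume "u \<in> V"
      show "wv u \<in> {1..2}"
      proof (cases "u = v")
        case True thus ?thesis unfolding wv_def by simp
      next
        case False
        hence "u \<in> N" using \<open>u \<in> V\<close> VN by auto
        hence "ix u < 3" using ixlt d123 by fastforce
        hence "1 \<le> 2 - (ix u + 1) div 2" "2 - (ix u + 1) div 2 \<le> 2" by presburger+
        thus ?thesis unfolding wv_def using False by simp
      qed
    next
      fix e assume "e \<in> E"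
      then obtain l where "l \<in> N" and "e = {v,l}" using EN by blast
      moreover have "ix l < 3" using ixlt[OF \<open>l \<in> N\<close>] d123 by auto
      moreover hence "1 \<le> 2 - ix l div 2" by presburger
      ultimately show "we e \<in> {1..2}" using we_l by auto
    next
      fix a b assume a: "a \<in> V" and b: "b \<in> V" and ab: "a \<noteq> b"
      have leafcase: "weighted_degree E wv we l \<noteq> weighted_degree E wv we v" if "l \<in> N" for l
      proof -
        have "d = 1 \<Longrightarrow> ix l = 0" using ixlt[OF that] by simp
        thus ?thesis using wdl[OF that] wdv_val ixlt[OF that] by auto
      qed
      show "weighted_degree E wv we a \<noteq> weighted_degree E wv we b"
      proof (cases "a = v")
        case True
        hence "b \<in> N" using b ab VN by auto
        thus ?thesis using leafcase[of b] True by metis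
      next
        case False
        hence aN: "a \<in> N" using a VN by auto
        show ?thesis
        proof (cases "b = v")
          case True thus ?thesis using leafcase[OF aN] by simp
        next
          case False
          hence bN: "b \<in> N" using b VN by auto
          have "ix a \<noteq> ix b" using ix aN bN ab unfolding bij_betw_def inj_on_def by blast
          moreover have "ix a < 4" "ix b < 4" using ixlt[OF aN] ixlt[OF bN] d123 by auto
          ultimately show ?thesis using wdl[OF aN] wdl[OF bN] by simp
        qed
      qed
    qed
  qed
qed

locale gen =
  fixes V :: "'a set" and E :: "'a set set"
  assumes bt: "binary_tree V E"
    and nostar: "\<And>v. v \<in> V \<Longrightarrow> \<exists>e\<in>E. v \<in> e \<and> (\<forall>l\<in>e. l = v \<or> degree E l \<noteq> 1)"
begin

definition "L = {v\<in>V. degree E v = 1}"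
definition "I = V - L"
definition "Ev v = {e\<in>E. v \<in> e}"
definition "LEv v = {e\<in>E. v \<in> e \<and> (\<exists>l\<in>e. l \<noteq> v \<and> l \<in> L)}"
definition "jv v = card (LEv v)"
definition "C0 = {v\<in>I. degree E v = 3 \<and> jv v = 0}"
definition "C1 = {v\<in>I. degree E v = 3 \<and> jv v = 1}"
definition "C2 = {v\<in>I. degree E v = 3 \<and> jv v = 2}"
definition "R = {v\<in>I. degree E v = 2}"
definition "m0 = card C0"
definition "m1 = card C1"
definition "m2 = card C2"
definition "n1 = card L"
definition "s = (n1 + 2) div 2"
definition "jR = (\<Sum>v\<in>R. jv v)"
definition "LE = {e\<in>E. \<exists>l\<in>e. l \<in> L}"
definition "le l = (SOME e. e \<in> E \<and> l \<in> e)"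
definition "par e = (SOME p. p \<in> e \<and> p \<notin> L)"

lemma sg: "simple_graph V E" and conn: "connected_graph V E" and ac: "acyclic_graph V E"
  and degs: "v \<in> V \<Longrightarrow> degree E v = 1 \<or> degree E v = 2 \<or> degree E v = 3"
  and deg2: "card {v\<in>V. degree E v = 2} \<le> 1"
  using bt unfolding binary_tree_def is_tree_def by auto

lemma fV: "finite V" using sg_finite[OF sg] .
lemma fE: "finite E" using sg_finE[OF sg] .
lemma Vne: "V \<noteq> {}" using conn unfolding connected_graph_def by simp

lemma deg_Ev: "degree E v = card (Ev v)" unfolding degree_def Ev_def ..
lemma fEv: "finite (Ev v)" unfolding Ev_def using fE by simp
lemma LEv_sub: "LEv v \<subseteq> Ev v" unfolding LEv_def Ev_def by blast
lemma fLEv: "finite (LEv v)" using finite_subset[OF LEv_sub fEv] .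

lemma Lsub: "L \<subseteq> V" unfolding L_def by blast
lemma fL: "finite L" using finite_subset[OF Lsub fV] .
lemma fI: "finite I" unfolding I_def using fV by simp

lemma leaf_edge:
  assumes "l \<in> L"
  shows "Ev l = {le l}" "le l \<in> E" "l \<in> le l"
proof -
  have "degree E l = 1" using assms unfolding L_def by simp
  then obtain e where e: "{e\<in>E. l \<in> e} = {e}" using deg1_edge by metis
  hence eE: "e \<in> E" "l \<in> e" by auto
  have "le l \<in> E \<and> l \<in> le l" unfolding le_def using someI[of "\<lambda>e. e \<in> E \<and> l \<in> e" e] eE by blast
  hence "le l \<in> {e\<in>E. l \<in> e}" by simp
  hence "le l = e" using e by simp
  thus "Ev l = {le l}" "le l \<in> E" "l \<in> le l" using e eE unfolding Ev_def by auto
qed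

lemma leaf_edge_other:
  assumes "l \<in> L"
  obtains p where "le l = {l, p}" "p \<in> I" "p \<noteq> l"
proof -
  have lV: "l \<in> V" using assms Lsub by blast
  obtain e where e: "e \<in> E" "l \<in> e" "\<forall>x\<in>e. x = l \<or> degree E x \<noteq> 1" using nostar[OF lV] by blast
  have "e \<in> Ev l" using e unfolding Ev_def by simp
  hence ele: "e = le l" using leaf_edge(1)[OF assms] by simp
  obtain a b where ab: "a \<in> V" "b \<in> V" "a \<noteq> b" "e = {a,b}" using sg_edge[OF sg e(1)] by metis
  obtain p where p: "e = {l, p}" "p \<noteq> l" "p \<in> V"
  proof (cases "a = l")
    case True thus ?thesis using that ab by blast
  next
    case False
    hence "b = l" using ab e(2) by blast
    thus ?thesis using that ab by (auto simp: insert_commute)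
  qed
  have "degree E p \<noteq> 1" using e(3) p by blast
  hence "p \<in> I" using p unfolding I_def L_def by simp
  thus ?thesis using that p ele by simp
qed

lemma edge_of_leaf: "e \<in> E \<Longrightarrow> l \<in> e \<Longrightarrow> l \<in> L \<Longrightarrow> e = le l"
proof -
  assume "e \<in> E" "l \<in> e" "l \<in> L"
  hence "e \<in> Ev l" unfolding Ev_def by simp
  thus "e = le l" using leaf_edge(1)[OF \<open>l \<in> L\<close>] by simp
qed

lemma LE_struct:
  assumes "e \<in> LE"
  obtains l p where "l \<in> L" "p \<in> I" "e = {l, p}" "p \<noteq> l" "e = le l" "par e = p"
proof -
  obtain l where l: "l \<in> e" "l \<in> L" "e \<in> E" using assms unfolding LE_def by blast
  have el: "e = le l" using edge_of_leaf l by blast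
  obtain p where p: "le l = {l, p}" "p \<in> I" "p \<noteq> l" using leaf_edge_other[OF l(2)] by metis
  have pL: "p \<notin> L" using p unfolding I_def by simp
  have "par e = p" unfolding par_def el p(1)
    using pL l(2) by (intro some_equality) auto
  thus ?thesis using that l p el by simp
qed

lemma I_LEv:
  assumes "v \<in> I"
  shows "LEv v = {e \<in> Ev v. e \<in> LE}"
proof -
  have "v \<notin> L" using assms unfolding I_def by simp
  show ?thesis unfolding LEv_def Ev_def LE_def
  proof (intro Collect_cong iffI)
    fix e assume "e \<in> E \<and> v \<in> e \<and> (\<exists>l\<in>e. l \<noteq> v \<and> l \<in> L)"
    thus "e \<in> {e \<in> E. v \<in> e} \<and> e \<in> {e \<in> E. \<exists>l\<in>e. l \<in> L}" by blast
  next
    fix e assume "e \<in> {e \<in> E. v \<in> e} \<and> e \<in> {e \<in> E. \<exists>l\<in>e. l \<in> L}"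
    thus "e \<in> E \<and> v \<in> e \<and> (\<exists>l\<in>e. l \<noteq> v \<and> l \<in> L)" using \<open>v \<notin> L\<close> by auto
  qed
qed

lemma par_LEv:
  assumes "v \<in> I" "e \<in> LEv v"
  shows "par e = v" "e \<in> LE"
proof -
  have "e \<in> LE" "v \<in> e" using I_LEv[OF assms(1)] assms(2) unfolding Ev_def by auto
  then obtain l p where lp: "l \<in> L" "p \<in> I" "e = {l, p}" "par e = p" using LE_struct by metis
  have "v \<noteq> l" using assms(1) lp(1) unfolding I_def by blast
  hence "v = p" using \<open>v \<in> e\<close> lp(3) by simp
  thus "par e = v" using lp(4) by simp
  show "e \<in> LE" by fact
qed

lemma jv_lt: "v \<in> V \<Longrightarrow> jv v < degree E v"
proof -
  assume vV: "v \<in> V"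
  obtain e where e: "e \<in> E" "v \<in> e" "\<forall>x\<in>e. x = v \<or> degree E x \<noteq> 1" using nostar[OF vV] by blast
  have "e \<notin> LEv v" using e unfolding LEv_def L_def by blast
  moreover have "e \<in> Ev v" using e unfolding Ev_def by simp
  ultimately have "LEv v \<subset> Ev v" using LEv_sub by blast
  thus ?thesis unfolding jv_def deg_Ev using psubset_card_mono[OF fEv] by blast
qed

lemma I_cases:
  assumes "v \<in> I"
  shows "v \<in> C0 \<or> v \<in> C1 \<or> v \<in> C2 \<or> v \<in> R"
proof -
  have vV: "v \<in> V" and "degree E v \<noteq> 1" using assms unfolding I_def L_def by auto
  hence d: "degree E v = 2 \<or> degree E v = 3" using degs by blast
  have "jv v < degree E v" using jv_lt[OF vV] .
  thus ?thesis using d assms unfolding C0_def C1_def C2_def R_def by auto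
qed

lemma classes_sub: "C0 \<subseteq> I" "C1 \<subseteq> I" "C2 \<subseteq> I" "R \<subseteq> I"
  unfolding C0_def C1_def C2_def R_def by auto

lemma classes_disj: "C0 \<inter> C1 = {}" "C0 \<inter> C2 = {}" "C1 \<inter> C2 = {}"
  "C0 \<inter> R = {}" "C1 \<inter> R = {}" "C2 \<inter> R = {}"
  unfolding C0_def C1_def C2_def R_def by auto

lemma I_union: "I = C0 \<union> C1 \<union> C2 \<union> R"
  using I_cases classes_sub by blast

lemma fin_classes: "finite C0" "finite C1" "finite C2" "finite R"
  using finite_subset[OF classes_sub(1) fI] finite_subset[OF classes_sub(2) fI]
    finite_subset[OF classes_sub(3) fI] finite_subset[OF classes_sub(4) fI] by auto

lemma cardR: "card R \<le> 1"
proof -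
  have "R \<subseteq> {v\<in>V. degree E v = 2}" unfolding R_def I_def by auto
  hence "card R \<le> card {v\<in>V. degree E v = 2}" using fV by (intro card_mono) auto
  thus ?thesis using deg2 by simp
qed

lemma jv_R: "v \<in> R \<Longrightarrow> jv v \<le> 1"
  using jv_lt[of v] unfolding R_def I_def by auto

lemma jR_le: "jR \<le> 1"
proof (cases "R = {}")
  case True thus ?thesis unfolding jR_def by simp
next
  case False
  then obtain r where "r \<in> R" by blast
  have all: "\<forall>a\<in>R. \<forall>b\<in>R. a = b" using cardR fin_classes(4) by (simp add: card_le_Suc0_iff_eq)
  have "R = {r}" using all \<open>r \<in> R\<close> by auto
  thus ?thesis unfolding jR_def using jv_R[OF \<open>r \<in> R\<close>] by simp
qed

lemma jR_ge: "v \<in> R \<Longrightarrow> jv v \<le> jR"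
  unfolding jR_def using fin_classes(4) by (intro member_le_sum) auto

lemma inj_le: "inj_on le L"
proof (rule inj_onI)
  fix l l' assume l: "l \<in> L" "l' \<in> L" "le l = le l'"
  obtain p where p: "le l = {l, p}" "p \<in> I" "p \<noteq> l" using leaf_edge_other[OF l(1)] by metis
  have "l' \<in> {l, p}" using leaf_edge(3)[OF l(2)] l(3) p(1) by simp
  moreover have "l' \<noteq> p" using p(2) l(2) unfolding I_def by blast
  ultimately show "l = l'" by simp
qed

lemma LE_img: "LE = le ` L"
proof
  show "LE \<subseteq> le ` L"
  proof
    fix e assume "e \<in> LE"
    then obtain l where "l \<in> L" "e = le l" using LE_struct by metis
    thus "e \<in> le ` L" by blast
  qed
  show "le ` L \<subseteq> LE"
  proof
    fix e assume "e \<in> le ` L"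
    then obtain l where l: "l \<in> L" "e = le l" by blast
    thus "e \<in> LE" unfolding LE_def using leaf_edge[OF l(1)] by blast
  qed
qed

lemma card_LE: "card LE = n1"
  unfolding LE_img n1_def using card_image[OF inj_le] .

lemma LE_UN: "LE = (\<Union>v\<in>I. LEv v)"
proof
  show "LE \<subseteq> (\<Union>v\<in>I. LEv v)"
  proof
    fix e assume e: "e \<in> LE"
    then obtain l p where lp: "l \<in> L" "p \<in> I" "e = {l, p}" "p \<noteq> l" using LE_struct by metis
    have "e \<in> E" using e unfolding LE_def by simp
    hence "e \<in> LEv p" unfolding LEv_def using lp by auto
    thus "e \<in> (\<Union>v\<in>I. LEv v)" using lp(2) by blast
  qed
  show "(\<Union>v\<in>I. LEv v) \<subseteq> LE" using par_LEv(2) by blast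
qed

lemma card_LE_sum: "card LE = (\<Sum>v\<in>I. jv v)"
proof -
  have "card (\<Union>v\<in>I. LEv v) = (\<Sum>v\<in>I. card (LEv v))"
  proof (rule card_UN_disjoint)
    show "finite I" using fI .
    show "\<forall>v\<in>I. finite (LEv v)" using fLEv by blast
    show "\<forall>i\<in>I. \<forall>j\<in>I. i \<noteq> j \<longrightarrow> LEv i \<inter> LEv j = {}"
    proof (intro ballI impI)
      fix i j assume "i \<in> I" "j \<in> I" "i \<noteq> j"
      show "LEv i \<inter> LEv j = {}"
      proof (rule ccontr)
        assume "LEv i \<inter> LEv j \<noteq> {}"
        then obtain e where "e \<in> LEv i" "e \<in> LEv j" by blast
        hence "par e = i" "par e = j" using par_LEv(1) \<open>i \<in> I\<close> \<open>j \<in> I\<close> by auto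
        thus False using \<open>i \<noteq> j\<close> by simp
      qed
    qed
  qed
  thus ?thesis unfolding LE_UN jv_def .
qed

lemma sum_I: "(\<Sum>v\<in>I. f v) = (\<Sum>v\<in>C0. f v) + (\<Sum>v\<in>C1. f v) + (\<Sum>v\<in>C2. f v) + (\<Sum>v\<in>R. f v)"
proof -
  have "(\<Sum>v\<in>I. f v) = (\<Sum>v\<in>C0 \<union> C1 \<union> C2 \<union> R. f v)" using I_union by simp
  also have "\<dots> = (\<Sum>v\<in>C0 \<union> C1 \<union> C2. f v) + (\<Sum>v\<in>R. f v)"
    using fin_classes classes_disj by (intro sum.union_disjoint) auto
  also have "(\<Sum>v\<in>C0 \<union> C1 \<union> C2. f v) = (\<Sum>v\<in>C0 \<union> C1. f v) + (\<Sum>v\<in>C2. f v)"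
    using fin_classes classes_disj by (intro sum.union_disjoint) auto
  also have "(\<Sum>v\<in>C0 \<union> C1. f v) = (\<Sum>v\<in>C0. f v) + (\<Sum>v\<in>C1. f v)"
    using fin_classes classes_disj by (intro sum.union_disjoint) auto
  finally show ?thesis .
qed

lemma card_I: "card I = m0 + m1 + m2 + card R"
  using sum_I[of "\<lambda>_. 1::nat"] unfolding m0_def m1_def m2_def by simp

lemma n1_eq: "n1 = m1 + 2 * m2 + jR"
proof -
  have "(\<Sum>v\<in>C0. jv v) = 0" unfolding C0_def by simp
  moreover have "(\<Sum>v\<in>C1. jv v) = m1" unfolding m1_def by (simp add: C1_def)
  moreover have "(\<Sum>v\<in>C2. jv v) = 2 * m2" unfolding m2_def by (simp add: C2_def)
  ultimately show ?thesis using card_LE card_LE_sum sum_I[of jv] unfolding jR_def by simp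
qed

lemma deg_sum: "(\<Sum>v\<in>V. degree E v) = n1 + 3 * (m0 + m1 + m2) + 2 * card R"
proof -
  have VLI: "V = L \<union> I" "L \<inter> I = {}" unfolding I_def using Lsub by auto
  have "(\<Sum>v\<in>V. degree E v) = (\<Sum>v\<in>L \<union> I. degree E v)"
    by (rule arg_cong[where f="sum (degree E)"]) (rule VLI(1))
  also have "\<dots> = (\<Sum>v\<in>L. degree E v) + (\<Sum>v\<in>I. degree E v)"
    using fL fI VLI(2) by (intro sum.union_disjoint) auto
  finally have "(\<Sum>v\<in>V. degree E v) = (\<Sum>v\<in>L. degree E v) + (\<Sum>v\<in>I. degree E v)" .
  moreover have "(\<Sum>v\<in>L. degree E v) = n1" unfolding n1_def by (simp add: L_def)
  moreover have "(\<Sum>v\<in>C0. degree E v) = 3 * m0" unfolding m0_def by (simp add: C0_def)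
  moreover have "(\<Sum>v\<in>C1. degree E v) = 3 * m1" unfolding m1_def by (simp add: C1_def)
  moreover have "(\<Sum>v\<in>C2. degree E v) = 3 * m2" unfolding m2_def by (simp add: C2_def)
  moreover have "(\<Sum>v\<in>R. degree E v) = 2 * card R" by (simp add: R_def)
  ultimately show ?thesis using sum_I[of "degree E"] by simp
qed

lemma card_V: "card V = n1 + card I"
proof -
  have VLI: "V = L \<union> I" "L \<inter> I = {}" unfolding I_def using Lsub by auto
  have "card V = card (L \<union> I)" by (rule arg_cong[where f=card]) (rule VLI(1))
  also have "\<dots> = card L + card I" using card_Un_disjoint[OF fL fI] VLI(2) by simp
  finally show ?thesis unfolding n1_def .
qed

lemma count: "m0 + m1 + m2 + 2 \<le> n1"
proof -
  have "card E + 1 \<le> card V" using acyclic_card[OF sg ac Vne] .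
  moreover have "(\<Sum>v\<in>V. degree E v) = 2 * card E" using handshake[OF sg] .
  ultimately have "n1 + 3 * (m0 + m1 + m2) + 2 * card R + 2 \<le> 2 * (n1 + (m0 + m1 + m2 + card R))"
    using deg_sum card_V card_I by simp
  thus ?thesis by simp
qed

lemma s_bounds: "n1 + 1 \<le> 2 * s" "2 * s \<le> n1 + 2"
  unfolding s_def by auto

lemma key: "m0 + 1 \<le> m2" "1 \<le> m2" "2 * m2 + m1 + jR + 1 \<le> 2 * s" "m2 + 1 \<le> s"
  using count n1_eq jR_le s_bounds by linarith+

end

context gen begin
definition "rk0 = (SOME h. bij_betw h C0 {0..<m0})"
definition "rk1 = (SOME h. bij_betw h C1 {0..<m1})"
definition "rk2 = (SOME h. bij_betw h C2 {0..<m2})"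
definition "ch p = (SOME e. e \<in> LEv p)"
definition "idx e = (if par e \<in> C2 then 2 * rk2 (par e) + (if e = ch (par e) then 0 else 1)
   else if par e \<in> C1 then 2 * m2 + rk1 (par e) else 2 * m2 + m1)"
definition "w e = (if e \<in> LE then s - idx e div 2 else s)"
definition "cv v = (if v \<in> C2 then rk2 v else if v \<in> C1 then m2 + rk1 v div 2 else (2 * m2 + m1) div 2)"

lemma rk0: "bij_betw rk0 C0 {0..<m0}"
  unfolding rk0_def m0_def using ex_bij_betw_finite_nat[OF fin_classes(1)] by (rule someI_ex)
lemma rk1: "bij_betw rk1 C1 {0..<m1}"
  unfolding rk1_def m1_def using ex_bij_betw_finite_nat[OF fin_classes(2)] by (rule someI_ex)
lemma rk2: "bij_betw rk2 C2 {0..<m2}"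
  unfolding rk2_def m2_def using ex_bij_betw_finite_nat[OF fin_classes(3)] by (rule someI_ex)

lemma rk_lt: "v \<in> C0 \<Longrightarrow> rk0 v < m0" "v \<in> C1 \<Longrightarrow> rk1 v < m1" "v \<in> C2 \<Longrightarrow> rk2 v < m2"
  using rk0 rk1 rk2 unfolding bij_betw_def by auto

lemma rk_inj: "u \<in> C0 \<Longrightarrow> v \<in> C0 \<Longrightarrow> rk0 u = rk0 v \<Longrightarrow> u = v"
  "u \<in> C1 \<Longrightarrow> v \<in> C1 \<Longrightarrow> rk1 u = rk1 v \<Longrightarrow> u = v"
  "u \<in> C2 \<Longrightarrow> v \<in> C2 \<Longrightarrow> rk2 u = rk2 v \<Longrightarrow> u = v"
  using rk0 rk1 rk2 unfolding bij_betw_def inj_on_def by auto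

lemma LE_par: assumes "e \<in> LE" shows "par e \<in> I" "e \<in> LEv (par e)" "par e \<notin> C0"
proof -
  obtain l p where lp: "l \<in> L" "p \<in> I" "e = {l, p}" "p \<noteq> l" "par e = p" using LE_struct[OF assms] by metis
  have "e \<in> E" using assms unfolding LE_def by simp
  hence eL: "e \<in> LEv p" unfolding LEv_def using lp by auto
  show "par e \<in> I" "e \<in> LEv (par e)" using lp eL by auto
  have "jv p \<noteq> 0" unfolding jv_def using eL fLEv by auto
  thus "par e \<notin> C0" using lp unfolding C0_def by simp
qed

lemma ch_in: "p \<in> C2 \<Longrightarrow> ch p \<in> LEv p"
proof -
  assume "p \<in> C2"
  hence "card (LEv p) = 2" unfolding C2_def jv_def by simp
  hence "LEv p \<noteq> {}" by auto
  then obtain e where "e \<in> LEv p" by blast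
  thus "ch p \<in> LEv p" unfolding ch_def by (rule someI)
qed

lemma ch_two: assumes "p \<in> C2" "e \<in> LEv p" "e' \<in> LEv p" "e \<noteq> ch p" "e' \<noteq> ch p"
  shows "e = e'"
proof (rule ccontr)
  assume ne: "e \<noteq> e'"
  have "{ch p, e, e'} \<subseteq> LEv p" using assms ch_in by auto
  hence "card {ch p, e, e'} \<le> card (LEv p)" using fLEv by (intro card_mono) auto
  moreover have "card {ch p, e, e'} = 3" using ne assms(4,5) by auto
  moreover have "card (LEv p) = 2" using assms(1) unfolding C2_def jv_def by simp
  ultimately show False by simp
qed

lemma one_leafy: assumes "p \<in> C1 \<or> p \<in> R" "e \<in> LEv p" "e' \<in> LEv p" shows "e = e'"
proof -
  have "card (LEv p) \<le> 1" using assms(1) jv_R unfolding C1_def jv_def by auto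
  thus ?thesis using assms(2,3) fLEv by (auto simp: card_le_Suc0_iff_eq)
qed

lemma idx_div: assumes "v \<in> I" "e \<in> LEv v" shows "idx e div 2 = cv v"
proof -
  have pe: "par e = v" using par_LEv[OF assms] by simp
  show ?thesis
  proof (cases "v \<in> C2")
    case True
    have "(2 * rk2 v + (if e = ch v then 0 else 1)) div 2 = rk2 v" by auto
    thus ?thesis unfolding idx_def cv_def pe using True by simp
  next
    case False
    thus ?thesis unfolding idx_def cv_def pe by auto
  qed
qed

lemma idx_cases: assumes "e \<in> LE"
  shows "(par e \<in> C2 \<and> idx e < 2 * m2) \<or> (par e \<in> C1 \<and> 2 * m2 \<le> idx e \<and> idx e < 2 * m2 + m1)
     \<or> (par e \<in> R \<and> idx e = 2 * m2 + m1 \<and> jR = 1)"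
proof -
  have pI: "par e \<in> I" and pC0: "par e \<notin> C0" and eL: "e \<in> LEv (par e)" using LE_par[OF assms] by auto
  have "par e \<in> C1 \<or> par e \<in> C2 \<or> par e \<in> R" using I_cases[OF pI] pC0 by blast
  moreover
  { assume "par e \<in> C2"
    hence "rk2 (par e) < m2" using rk_lt by blast
    hence "idx e < 2 * m2" unfolding idx_def using \<open>par e \<in> C2\<close> by auto }
  moreover
  { assume "par e \<in> C1"
    hence "rk1 (par e) < m1" "par e \<notin> C2" using rk_lt classes_disj by blast+
    hence "2 * m2 \<le> idx e \<and> idx e < 2 * m2 + m1" unfolding idx_def using \<open>par e \<in> C1\<close> by auto }
  moreover
  { assume r: "par e \<in> R"
    hence "par e \<notin> C2" "par e \<notin> C1" using classes_disj by blast+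
    hence "idx e = 2 * m2 + m1" unfolding idx_def by auto
    moreover have "jv (par e) \<noteq> 0" unfolding jv_def using eL fLEv by auto
    hence "jR = 1" using jR_ge[OF r] jR_le by simp
    ultimately have "idx e = 2 * m2 + m1 \<and> jR = 1" by simp }
  ultimately show ?thesis by blast
qed

lemma idx_lt: "e \<in> LE \<Longrightarrow> idx e < n1"
  using idx_cases[of e] n1_eq by auto

lemma idx_C2: "par e \<in> C2 \<Longrightarrow> idx e < 2 * m2"
proof -
  assume a: "par e \<in> C2"
  hence "rk2 (par e) < m2" using rk_lt by blast
  thus ?thesis unfolding idx_def using a by auto
qed

lemma idx_C1: "par e \<in> C1 \<Longrightarrow> 2 * m2 \<le> idx e \<and> idx e < 2 * m2 + m1"
proof -
  assume a: "par e \<in> C1"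
  hence "rk1 (par e) < m1" "par e \<notin> C2" using rk_lt classes_disj by blast+
  thus ?thesis unfolding idx_def using a by auto
qed

lemma idx_R: "par e \<notin> C2 \<Longrightarrow> par e \<notin> C1 \<Longrightarrow> idx e = 2 * m2 + m1"
  unfolding idx_def by simp

lemma LE_par_cases: "e \<in> LE \<Longrightarrow> par e \<in> C1 \<or> par e \<in> C2 \<or> par e \<in> R"
  using I_cases[of "par e"] LE_par[of e] by blast

lemma Rsing: "a \<in> R \<Longrightarrow> b \<in> R \<Longrightarrow> a = b"
proof -
  have "\<forall>a\<in>R. \<forall>b\<in>R. a = b" using cardR fin_classes(4) by (simp add: card_le_Suc0_iff_eq)
  thus "a \<in> R \<Longrightarrow> b \<in> R \<Longrightarrow> a = b" by blast
qed

lemma idx_inj: "inj_on idx LE"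
proof (rule inj_onI)
  fix e e' assume e: "e \<in> LE" and e': "e' \<in> LE" and eq: "idx e = idx e'"
  have pI: "par e \<in> I" "e \<in> LEv (par e)" using LE_par[OF e] by auto
  have pI': "par e' \<in> I" "e' \<in> LEv (par e')" using LE_par[OF e'] by auto
  have C12: "par e \<notin> C1" if "par e \<in> C2" using that classes_disj(3) by blast
  have C12': "par e' \<notin> C1" if "par e' \<in> C2" using that classes_disj(3) by blast
  show "e = e'"
  proof (cases "par e \<in> C2")
    case True
    have p2': "par e' \<in> C2"
    proof (rule ccontr)
      assume n: "par e' \<notin> C2"
      have "2 * m2 \<le> idx e'"
      proof (cases "par e' \<in> C1")
        case True thus ?thesis using idx_C1[OF True] by simp
      next
        case False thus ?thesis using idx_R[OF n False] by simp
      qed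
      thus False using idx_C2[OF True] eq by simp
    qed
    have "idx e div 2 = rk2 (par e)" "idx e' div 2 = rk2 (par e')"
      using idx_div[OF pI] idx_div[OF pI'] True p2' unfolding cv_def by auto
    hence pp: "par e = par e'" using rk_inj(3)[OF True p2'] eq by simp
    show ?thesis
    proof (cases "e = ch (par e)")
      case True2: True
      show ?thesis
      proof (rule ccontr)
        assume "e \<noteq> e'"
        hence "e' \<noteq> ch (par e')" using True2 pp by simp
        hence "idx e' = 2 * rk2 (par e') + 1" unfolding idx_def using p2' by simp
        moreover have "idx e = 2 * rk2 (par e)" unfolding idx_def using True True2 by simp
        ultimately show False using eq pp by presburger
      qed
    next
      case False2: False
      show ?thesis
      proof (cases "e' = ch (par e')")
        case True3: True
        hence "idx e' = 2 * rk2 (par e')" unfolding idx_def using p2' by simp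
        moreover have "idx e = 2 * rk2 (par e) + 1" unfolding idx_def using True False2 by simp
        ultimately show ?thesis using eq pp by presburger
      next
        case False3: False
        have "e' \<in> LEv (par e)" using pI'(2) pp by simp
        moreover have "e' \<noteq> ch (par e)" using False3 pp by simp
        ultimately show ?thesis using ch_two[OF True pI(2) _ False2] by simp
      qed
    qed
  next
    case False
    have n2': "par e' \<notin> C2"
    proof
      assume "par e' \<in> C2"
      hence "idx e' < 2 * m2" by (rule idx_C2)
      moreover have "2 * m2 \<le> idx e"
      proof (cases "par e \<in> C1")
        case True thus ?thesis using idx_C1[OF True] by simp
      next
        case F: False thus ?thesis using idx_R[OF False F] by simp
      qed
      ultimately show False using eq by simp
    qed
    show ?thesis
    proof (cases "par e \<in> C1")
      case True
      have p1': "par e' \<in> C1"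
      proof (rule ccontr)
        assume "par e' \<notin> C1"
        hence "idx e' = 2 * m2 + m1" using idx_R[OF n2'] by simp
        thus False using idx_C1[OF True] eq by simp
      qed
      have "idx e = 2 * m2 + rk1 (par e)" unfolding idx_def using False True by simp
      moreover have "idx e' = 2 * m2 + rk1 (par e')" unfolding idx_def using n2' p1' by simp
      ultimately have "rk1 (par e) = rk1 (par e')" using eq by simp
      hence "par e = par e'" using rk_inj(2)[OF True p1'] by simp
      thus ?thesis using one_leafy[of "par e" e e'] True pI(2) pI'(2) by simp
    next
      case False1: False
      have pR: "par e \<in> R" using LE_par_cases[OF e] False False1 by blast
      have n1': "par e' \<notin> C1"
      proof
        assume "par e' \<in> C1"
        hence "idx e' < 2 * m2 + m1" using idx_C1 by simp
        thus False using idx_R[OF False False1] eq by simp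
      qed
      have pR': "par e' \<in> R" using LE_par_cases[OF e'] n2' n1' by blast
      hence "par e = par e'" using Rsing[OF pR] by simp
      thus ?thesis using one_leafy[of "par e" e e'] pR pI(2) pI'(2) by simp
    qed
  qed
qed

lemma w_range: "e \<in> E \<Longrightarrow> w e \<in> {1..s}"
proof -
  assume "e \<in> E"
  have "1 \<le> s" using s_bounds by simp
  moreover have "e \<in> LE \<Longrightarrow> 1 \<le> s - idx e div 2"
  proof -
    assume "e \<in> LE"
    hence "idx e < n1" using idx_lt by simp
    hence "idx e div 2 < s" using s_bounds by linarith
    thus ?thesis by simp
  qed
  ultimately show ?thesis unfolding w_def by auto
qed

lemma sum_internal:
  assumes "v \<in> I"
  shows "(\<Sum>e\<in>Ev v. w e) = jv v * (s - cv v) + (degree E v - jv v) * s"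
proof -
  have split: "Ev v = LEv v \<union> (Ev v - LEv v)" "LEv v \<inter> (Ev v - LEv v) = {}" using LEv_sub by auto
  have "(\<Sum>e\<in>Ev v. w e) = (\<Sum>e\<in>LEv v \<union> (Ev v - LEv v). w e)" using split(1) by simp
  also have "\<dots> = (\<Sum>e\<in>LEv v. w e) + (\<Sum>e\<in>Ev v - LEv v. w e)"
    using fLEv fEv split(2) by (intro sum.union_disjoint) auto
  also have "(\<Sum>e\<in>LEv v. w e) = (\<Sum>e\<in>LEv v. s - cv v)"
  proof (rule sum.cong)
    fix e assume "e \<in> LEv v"
    thus "w e = s - cv v" unfolding w_def using par_LEv(2)[OF assms] idx_div[OF assms] by simp
  qed simp
  also have "(\<Sum>e\<in>Ev v - LEv v. w e) = (\<Sum>e\<in>Ev v - LEv v. s)"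
  proof (rule sum.cong)
    fix e assume "e \<in> Ev v - LEv v"
    hence "e \<notin> LE" using I_LEv[OF assms] by auto
    thus "w e = s" unfolding w_def by simp
  qed simp
  finally have eq: "(\<Sum>e\<in>Ev v. w e) = (\<Sum>e\<in>LEv v. s - cv v) + (\<Sum>e\<in>Ev v - LEv v. s)" .
  have "card (Ev v - LEv v) = degree E v - jv v"
    unfolding deg_Ev jv_def using card_Diff_subset[OF fLEv LEv_sub] .
  thus ?thesis unfolding eq jv_def by simp
qed

lemma sum_leaf:
  assumes "l \<in> L"
  shows "(\<Sum>e\<in>Ev l. w e) = s - idx (le l) div 2"
proof -
  have "le l \<in> LE" unfolding LE_def using leaf_edge[OF assms] assms by blast
  thus ?thesis using leaf_edge(1)[OF assms] unfolding w_def by simp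
qed

end

lemma half_sum: "x div 2 + (x + 1) div 2 = (x::nat)" by presburger
lemma half_le: "2 * (x div 2) \<le> (x::nat)" by presburger
lemma h2: "2 * b + 1 \<le> 2 * (s::nat) \<Longrightarrow> b + 1 \<le> s" by presburger

context gen begin

definition "wv v = (if v \<in> L then s - (idx (le v) + 1) div 2
   else if v \<in> R then 1 + jv v * cv v
   else if v \<in> C0 then (s + 1 + m0) - (m2 + rk0 v)
   else if v \<in> C2 then (s + 1 + rk2 v) - m2
   else (s + 1) - (m2 + (rk1 v + 1) div 2))"

definition "T v = (if v \<in> L then 2 * s - idx (le v)
   else if v \<in> R then 2 * s + 1
   else if v \<in> C0 then (4 * s + 1 + m0) - (m2 + rk0 v)
   else if v \<in> C2 then (4 * s + 1) - (m2 + rk2 v)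
   else (4 * s + 1) - (2 * m2 + rk1 v))"

lemma wd_def': "weighted_degree E wv w v = wv v + (\<Sum>e\<in>Ev v. w e)"
  unfolding weighted_degree_def Ev_def ..

lemma notL: "v \<in> C0 \<Longrightarrow> v \<notin> L" "v \<in> C1 \<Longrightarrow> v \<notin> L" "v \<in> C2 \<Longrightarrow> v \<notin> L" "v \<in> R \<Longrightarrow> v \<notin> L"
  using classes_sub unfolding I_def by auto

lemma inI: "v \<in> C0 \<Longrightarrow> v \<in> I" "v \<in> C1 \<Longrightarrow> v \<in> I" "v \<in> C2 \<Longrightarrow> v \<in> I" "v \<in> R \<Longrightarrow> v \<in> I"
  using classes_sub by auto

lemma leaf_case:
  assumes "v \<in> L"
  shows "weighted_degree E wv w v = T v" "wv v \<in> {1..s}" "T v = 2 * s - idx (le v)"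
proof -
  have "le v \<in> LE" unfolding LE_def using leaf_edge[OF assms] assms by blast
  hence lt: "idx (le v) < n1" using idx_lt by simp
  define x where "x = idx (le v)"
  have x: "x + 2 \<le> 2 * s" using lt s_bounds unfolding x_def by linarith
  have wd: "weighted_degree E wv w v = (s - (x + 1) div 2) + (s - x div 2)"
    unfolding wd_def' sum_leaf[OF assms] wv_def x_def using assms by simp
  have hs: "x div 2 + (x + 1) div 2 = x" by (rule half_sum)
  have "2 * ((x + 1) div 2) \<le> x + 1" by (rule half_le)
  hence b1: "(x + 1) div 2 + 1 \<le> s" using x by (rule_tac h2) linarith
  have eq: "(s - (x + 1) div 2) + (s - x div 2) = 2 * s - x" using hs b1 by linarith
  have Tv: "T v = 2 * s - x" unfolding T_def x_def using assms by simp
  show "weighted_degree E wv w v = T v" unfolding wd eq Tv ..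
  have "1 \<le> s - (x + 1) div 2" "s - (x + 1) div 2 \<le> s" using b1 by linarith+
  thus "wv v \<in> {1..s}" unfolding wv_def x_def using assms by simp
  show "T v = 2 * s - idx (le v)" unfolding T_def using assms by simp
qed

lemma R_case:
  assumes "v \<in> R"
  shows "weighted_degree E wv w v = T v" "wv v \<in> {1..s}" "T v = 2 * s + 1"
proof -
  have vL: "v \<notin> L" using notL assms by simp
  have vI: "v \<in> I" using inI assms by simp
  have nC: "v \<notin> C1" "v \<notin> C2" using classes_disj assms by blast+
  have cv: "cv v = (2 * m2 + m1) div 2" unfolding cv_def using nC by simp
  have deg: "degree E v = 2" using assms unfolding R_def by simp
  have j1: "jv v \<le> 1" using jv_R[OF assms] .
  have jj: "jv v = 1 \<Longrightarrow> 2 * m2 + m1 + 2 \<le> 2 * s" using jR_ge[OF assms] jR_le key(3) by simp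
  have "2 * ((2 * m2 + m1) div 2) \<le> 2 * m2 + m1" by (rule half_le)
  hence sm: "jv v = 1 \<Longrightarrow> cv v + 1 \<le> s" using jj unfolding cv by linarith
  have S: "(\<Sum>e\<in>Ev v. w e) = jv v * (s - cv v) + (2 - jv v) * s" using sum_internal[OF vI] deg by simp
  have wvv: "wv v = 1 + jv v * cv v" unfolding wv_def using vL assms by simp
  have Tv: "T v = 2 * s + 1" unfolding T_def using vL assms by simp
  show "T v = 2 * s + 1" by (rule Tv)
  show "weighted_degree E wv w v = T v"
  proof (cases "jv v = 0")
    case True thus ?thesis unfolding wd_def' S wvv Tv by simp
  next
    case False
    hence "jv v = 1" using j1 by simp
    thus ?thesis unfolding wd_def' S wvv Tv using sm by simp
  qed
  show "wv v \<in> {1..s}"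
  proof (cases "jv v = 0")
    case True thus ?thesis unfolding wvv using key by simp
  next
    case False
    hence "jv v = 1" using j1 by simp
    thus ?thesis unfolding wvv using sm by simp
  qed
qed

lemma C0_case:
  assumes "v \<in> C0"
  shows "weighted_degree E wv w v = T v" "wv v \<in> {1..s}"
    "T v = (4 * s + 1 + m0) - (m2 + rk0 v)"
proof -
  have vL: "v \<notin> L" using notL assms by simp
  have vI: "v \<in> I" using inI assms by simp
  have nR: "v \<notin> R" using classes_disj assms by blast
  have dj: "degree E v = 3" "jv v = 0" using assms unfolding C0_def by auto
  have S: "(\<Sum>e\<in>Ev v. w e) = 3 * s" using sum_internal[OF vI] dj by simp
  have r: "rk0 v < m0" using rk_lt assms by blast
  have wvv: "wv v = (s + 1 + m0) - (m2 + rk0 v)" unfolding wv_def using vL nR assms by simp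
  have Tv: "T v = (4 * s + 1 + m0) - (m2 + rk0 v)" unfolding T_def using vL nR assms by simp
  show "T v = (4 * s + 1 + m0) - (m2 + rk0 v)" by (rule Tv)
  show "weighted_degree E wv w v = T v" unfolding wd_def' S wvv Tv using key r by simp
  show "wv v \<in> {1..s}" unfolding wvv using key(1,4) r by (simp, arith)
qed

lemma C2_case:
  assumes "v \<in> C2"
  shows "weighted_degree E wv w v = T v" "wv v \<in> {1..s}"
    "T v = (4 * s + 1) - (m2 + rk2 v)"
proof -
  have vL: "v \<notin> L" using notL assms by simp
  have vI: "v \<in> I" using inI assms by simp
  have nR: "v \<notin> R" "v \<notin> C0" using classes_disj assms by blast+
  have dj: "degree E v = 3" "jv v = 2" using assms unfolding C2_def by auto
  have cv: "cv v = rk2 v" unfolding cv_def using assms by simp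
  have S: "(\<Sum>e\<in>Ev v. w e) = 2 * (s - rk2 v) + s" using sum_internal[OF vI] dj cv by simp
  have r: "rk2 v < m2" using rk_lt assms by blast
  have wvv: "wv v = (s + 1 + rk2 v) - m2" unfolding wv_def using vL nR assms by simp
  have Tv: "T v = (4 * s + 1) - (m2 + rk2 v)" unfolding T_def using vL nR assms by simp
  show "T v = (4 * s + 1) - (m2 + rk2 v)" by (rule Tv)
  show "weighted_degree E wv w v = T v" unfolding wd_def' S wvv Tv using key r by simp
  show "wv v \<in> {1..s}" unfolding wvv using key(1,4) r by (simp, arith)
qed

lemma C1_case:
  assumes "v \<in> C1"
  shows "weighted_degree E wv w v = T v" "wv v \<in> {1..s}"
    "T v = (4 * s + 1) - (2 * m2 + rk1 v)"
proof -
  have vL: "v \<notin> L" using notL assms by simp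
  have vI: "v \<in> I" using inI assms by simp
  have nR: "v \<notin> R" "v \<notin> C0" "v \<notin> C2" using classes_disj assms by blast+
  have dj: "degree E v = 3" "jv v = 1" using assms unfolding C1_def by auto
  have cv: "cv v = m2 + rk1 v div 2" unfolding cv_def using assms nR by simp
  have S: "(\<Sum>e\<in>Ev v. w e) = (s - (m2 + rk1 v div 2)) + 2 * s" using sum_internal[OF vI] dj cv by simp
  have r: "rk1 v < m1" using rk_lt assms by blast
  define t where "t = rk1 v"
  have tt: "t < m1" "2 * m2 + m1 + 1 \<le> 2 * s" "1 \<le> m2" using r key unfolding t_def by auto
  have wvv: "wv v = (s + 1) - (m2 + (t + 1) div 2)" unfolding wv_def t_def using vL nR assms by simp
  have Tv: "T v = (4 * s + 1) - (2 * m2 + t)" unfolding T_def t_def using vL nR assms by simp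
  show "T v = (4 * s + 1) - (2 * m2 + rk1 v)" using Tv unfolding t_def .
  have hs: "t div 2 + (t + 1) div 2 = t" by (rule half_sum)
  have "2 * ((t + 1) div 2) \<le> t + 1" by (rule half_le)
  hence b1: "m2 + (t + 1) div 2 \<le> s" using tt by linarith
  have "(s + 1) - (m2 + (t + 1) div 2) + ((s - (m2 + t div 2)) + 2 * s) = (4 * s + 1) - (2 * m2 + t)"
    using hs b1 by linarith
  thus "weighted_degree E wv w v = T v" unfolding wd_def' S wvv Tv t_def by simp
  have "1 \<le> (s + 1) - (m2 + (t + 1) div 2)" "(s + 1) - (m2 + (t + 1) div 2) \<le> s"
    using b1 tt by linarith+
  thus "wv v \<in> {1..s}" unfolding wvv by simp
qed

lemma V_cases: "v \<in> V \<Longrightarrow> v \<in> L \<or> v \<in> C0 \<or> v \<in> C1 \<or> v \<in> C2 \<or> v \<in> R"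
  using I_cases[of v] unfolding I_def by blast

lemma wd_all: "v \<in> V \<Longrightarrow> weighted_degree E wv w v = T v \<and> wv v \<in> {1..s}"
  using V_cases[of v] leaf_case R_case C0_case C1_case C2_case by blast

lemma T_bounds:
  "v \<in> L \<Longrightarrow> T v \<le> 2 * s"
  "v \<in> R \<Longrightarrow> T v = 2 * s + 1"
  "v \<in> C1 \<Longrightarrow> 2 * s + 3 \<le> T v \<and> T v + 2 * m2 \<le> 4 * s + 1"
  "v \<in> C2 \<Longrightarrow> 4 * s + 2 \<le> T v + 2 * m2 \<and> T v + m2 \<le> 4 * s + 1"
  "v \<in> C0 \<Longrightarrow> 4 * s + 2 \<le> T v + m2"
proof -
  show "v \<in> L \<Longrightarrow> T v \<le> 2 * s" using leaf_case(3) by simp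
  show "v \<in> R \<Longrightarrow> T v = 2 * s + 1" using R_case(3) by simp
  show "v \<in> C1 \<Longrightarrow> 2 * s + 3 \<le> T v \<and> T v + 2 * m2 \<le> 4 * s + 1"
  proof -
    assume a: "v \<in> C1"
    have "rk1 v < m1" using rk_lt a by blast
    thus ?thesis using C1_case(3)[OF a] key by simp
  qed
  show "v \<in> C2 \<Longrightarrow> 4 * s + 2 \<le> T v + 2 * m2 \<and> T v + m2 \<le> 4 * s + 1"
  proof -
    assume a: "v \<in> C2"
    have "rk2 v < m2" using rk_lt a by blast
    thus ?thesis using C2_case(3)[OF a] key by simp
  qed
  show "v \<in> C0 \<Longrightarrow> 4 * s + 2 \<le> T v + m2"
  proof -
    assume a: "v \<in> C0"
    have "rk0 v < m0" using rk_lt a by blast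
    thus ?thesis using C0_case(3)[OF a] key by simp
  qed
qed

end

definition Bnd :: "nat \<Rightarrow> nat \<Rightarrow> nat \<Rightarrow> nat \<Rightarrow> bool" where
  "Bnd s m2 i x = ((i = 0 \<and> x \<le> 2 * s) \<or> (i = 1 \<and> x = 2 * s + 1)
    \<or> (i = 2 \<and> 2 * s + 3 \<le> x \<and> x + 2 * m2 \<le> 4 * s + 1)
    \<or> (i = 3 \<and> 4 * s + 2 \<le> x + 2 * m2 \<and> x + m2 \<le> 4 * s + 1)
    \<or> (i = 4 \<and> 4 * s + 2 \<le> x + m2))"

lemma Bsep:
  assumes "2 * m2 + 1 \<le> 2 * s" "Bnd s m2 i x" "Bnd s m2 j y" "i \<noteq> j"
  shows "x \<noteq> y"
  using assms unfolding Bnd_def by (elim disjE conjE; linarith)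

context gen begin

definition "lvl v = (if v \<in> L then 0 else if v \<in> R then 1 else if v \<in> C1 then 2
   else if v \<in> C2 then (3::nat) else 4)"

lemma B_lvl: "v \<in> V \<Longrightarrow> Bnd s m2 (lvl v) (T v)"
proof -
  assume vV: "v \<in> V"
  consider "v \<in> L" | "v \<in> R" | "v \<in> C1" | "v \<in> C2" | "v \<in> C0" using V_cases[OF vV] by blast
  thus ?thesis
  proof cases
    case 1 thus ?thesis unfolding Bnd_def lvl_def using T_bounds(1) by simp
  next
    case 2
    hence "v \<notin> L" using notL by simp
    thus ?thesis unfolding Bnd_def lvl_def using T_bounds(2) 2 by simp
  next
    case 3
    hence "v \<notin> L" "v \<notin> R" using notL classes_disj by blast+
    thus ?thesis unfolding Bnd_def lvl_def using T_bounds(3)[OF 3] 3 by simp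
  next
    case 4
    hence "v \<notin> L" "v \<notin> R" "v \<notin> C1" using notL classes_disj by blast+
    thus ?thesis unfolding Bnd_def lvl_def using T_bounds(4)[OF 4] 4 by simp
  next
    case 5
    hence "v \<notin> L" "v \<notin> R" "v \<notin> C1" "v \<notin> C2" using notL classes_disj by blast+
    thus ?thesis unfolding Bnd_def lvl_def using T_bounds(5)[OF 5] 5 by simp
  qed
qed

lemma T_inj:
  assumes uV: "u \<in> V" and vV: "v \<in> V" and eq: "T u = T v"
  shows "u = v"
proof -
  have k: "2 * m2 + 1 \<le> 2 * s" using key(3) by linarith
  have ll: "lvl u = lvl v"
  proof (rule ccontr)
    assume "lvl u \<noteq> lvl v"
    thus False using Bsep[OF k B_lvl[OF uV] B_lvl[OF vV]] eq by simp
  qed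
  consider "u \<in> L" | "u \<in> R" | "u \<in> C1" | "u \<in> C2" | "u \<in> C0" using V_cases[OF uV] by blast
  thus ?thesis
  proof cases
    case 1
    hence "lvl v = 0" using ll unfolding lvl_def by simp
    hence vL: "v \<in> L" unfolding lvl_def by (auto split: if_splits)
    have e1: "le u \<in> LE" unfolding LE_def using leaf_edge[OF 1] 1 by blast
    have e2: "le v \<in> LE" unfolding LE_def using leaf_edge[OF vL] vL by blast
    have "idx (le u) < n1" "idx (le v) < n1" using idx_lt e1 e2 by auto
    hence "idx (le u) = idx (le v)" using eq leaf_case(3)[OF 1] leaf_case(3)[OF vL] s_bounds by linarith
    hence "le u = le v" using inj_onD[OF idx_inj _ e1 e2] by simp
    thus ?thesis using inj_onD[OF inj_le _ 1 vL] by simp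
  next
    case 2
    hence "u \<notin> L" using notL by simp
    hence "lvl v = 1" using ll 2 unfolding lvl_def by simp
    hence "v \<in> R" unfolding lvl_def by (auto split: if_splits)
    thus ?thesis using Rsing[OF 2] by simp
  next
    case 3
    hence "u \<notin> L" "u \<notin> R" using notL classes_disj by blast+
    hence "lvl v = 2" using ll 3 unfolding lvl_def by simp
    hence v1: "v \<in> C1" unfolding lvl_def by (auto split: if_splits)
    have "rk1 u < m1" "rk1 v < m1" using rk_lt 3 v1 by auto
    hence "rk1 u = rk1 v" using eq C1_case(3)[OF 3] C1_case(3)[OF v1] key by linarith
    thus ?thesis using rk_inj(2)[OF 3 v1] by simp
  next
    case 4
    hence "u \<notin> L" "u \<notin> R" "u \<notin> C1" using notL classes_disj by blast+
    hence "lvl v = 3" using ll 4 unfolding lvl_def by simp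
    hence v2: "v \<in> C2" unfolding lvl_def by (auto split: if_splits)
    have "rk2 u < m2" "rk2 v < m2" using rk_lt 4 v2 by auto
    hence "rk2 u = rk2 v" using eq C2_case(3)[OF 4] C2_case(3)[OF v2] key by linarith
    thus ?thesis using rk_inj(3)[OF 4 v2] by simp
  next
    case 5
    hence "u \<notin> L" "u \<notin> R" "u \<notin> C1" "u \<notin> C2" using notL classes_disj by blast+
    hence "lvl v = 4" using ll 5 unfolding lvl_def by simp
    hence vC: "v \<notin> L" "v \<notin> R" "v \<notin> C1" "v \<notin> C2" unfolding lvl_def by (auto split: if_splits)
    hence v0: "v \<in> C0" using V_cases[OF vV] by blast
    have "rk0 u < m0" "rk0 v < m0" using rk_lt 5 v0 by auto
    hence "rk0 u = rk0 v" using eq C0_case(3)[OF 5] C0_case(3)[OF v0] key by linarith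
    thus ?thesis using rk_inj(1)[OF 5 v0] by simp
  qed
qed

lemma gen_weighting: "irregular_total_weighting V E s wv w"
  unfolding irregular_total_weighting_def
proof (intro conjI ballI impI)
  fix v assume "v \<in> V" thus "wv v \<in> {1..s}" using wd_all by blast
next
  fix e assume "e \<in> E" thus "w e \<in> {1..s}" using w_range by blast
next
  fix u v assume "u \<in> V" "v \<in> V" "u \<noteq> v"
  thus "weighted_degree E wv w u \<noteq> weighted_degree E wv w v" using wd_all T_inj by metis
qed

end

theorem corollary1:
  fixes V :: "'a set" and E :: "'a set set"
  assumes "binary_tree V E"
  shows "tvs V E = nat \<lceil>(real (card {v \<in> V. degree E v = 1}) + 1) / 2\<rceil>"
proof -
  define n where "n = card {v \<in> V. degree E v = 1}"
  define s0 where "s0 = (n + 2) div 2"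
  have sg: "simple_graph V E" and conn: "connected_graph V E"
    using assms unfolding binary_tree_def is_tree_def by auto
  have Vne: "V \<noteq> {}" using conn unfolding connected_graph_def by simp
  have ub: "\<exists>wv we. irregular_total_weighting V E s0 wv we"
  proof (cases "\<exists>v\<in>V. \<forall>e\<in>E. v \<in> e \<longrightarrow> (\<exists>l\<in>e. l \<noteq> v \<and> degree E l = 1)")
    case True
    then obtain v where "v \<in> V" "\<forall>e\<in>E. v \<in> e \<longrightarrow> (\<exists>l\<in>e. l \<noteq> v \<and> degree E l = 1)" by blast
    thus ?thesis using star_case[OF assms] unfolding s0_def n_def by blast
  next
    case False
    have ns: "\<exists>e\<in>E. v \<in> e \<and> (\<forall>l\<in>e. l = v \<or> degree E l \<noteq> 1)" if vV: "v \<in> V" for v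
    proof -
      have "\<not> (\<forall>e\<in>E. v \<in> e \<longrightarrow> (\<exists>l\<in>e. l \<noteq> v \<and> degree E l = 1))" using False vV by blast
      then obtain e where "e \<in> E" "v \<in> e" "\<not> (\<exists>l\<in>e. l \<noteq> v \<and> degree E l = 1)" by blast
      thus ?thesis by blast
    qed
    interpret g: gen V E using assms ns by unfold_locales auto
    have "g.s = s0" unfolding g.s_def g.n1_def g.L_def s0_def n_def ..
    thus ?thesis using g.gen_weighting by metis
  qed
  have lb: "s0 \<le> s'" if "\<exists>wv we. irregular_total_weighting V E s' wv we" for s'
  proof -
    from that obtain wv we where "irregular_total_weighting V E s' wv we" by blast
    hence "n + 1 \<le> 2 * s'" using lower_bound[OF sg Vne] unfolding n_def by blast
    thus ?thesis unfolding s0_def by presburger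
  qed
  have "tvs V E = s0" unfolding tvs_def
    by (rule Least_equality) (use ub lb in auto)
  thus ?thesis using ceil_half[of n] unfolding s0_def n_def by simp
qed

end
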